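(* Let $n\ge1$, $1\le k\le n+1$ and $0<p<\frac{2(n+1+k)}{k(n+k-1)}$. For $i=1,\dots,k$ let $S_i\subset\mathbb S^n$ be a (relatively open) neighborhood of $e_i$ in the unit sphere, small enough to be parametrized as $S_i=\Sigma_i(U_i)$ with $U_i\subset\{\zeta\in\mathbb R^{n+1}:\zeta_i=0\}\cong\mathbb R^n$ an open neighborhood of $0$ and $$\Sigma_i(\zeta_1,\dots,\widehat{\zeta_i},\dots,\zeta_{n+1})=\Big(\zeta_1,\dots,\zeta_{i-1},\sqrt{1-\textstyle\sum_{j\ne i}\zeta_j^2},\zeta_{i+1},\dots,\zeta_{n+1}\Big).$$ Then there is no constant $C<\infty$ such that $$\Big\|\prod_{i=1}^k\mathcal E_if_i\Big\|_{L^p(\mathbb R^{n+1})}\le C\prod_{i=1}^k\|f_i\|_{L^2(U_i)}\quad\text{for all }f_i\in L^2(U_i).$$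
   Context: $e_i\in\mathbb R^{n+1}$ is the $i$-th standard unit vector, $\mathbb S^n$ the unit sphere in $\mathbb R^{n+1}$, $\widehat{\zeta_i}$ denotes omission of the $i$-th coordinate, and $\mathcal E_if(x)=\int_{U_i}e^{ix\cdot\Sigma_i(\xi)}f(\xi)\,d\xi$ for $x\in\mathbb R^{n+1}$. *)

theory Defs
  imports "HOL-Analysis.Analysis"
begin

text \<open>Points of R^(n+1) are vectors of type real^'n with CARD('n) = n+1.
  The coordinate hyperplane {zeta. zeta$i = 0} is identified with R^n.\<close>

definition hyperplane :: "'n::finite \<Rightarrow> (real^'n) set" where
  "hyperplane i = {\<zeta>. \<zeta>$i = 0}"

definition coord_zero :: "'n::finite \<Rightarrow> real^'n \<Rightarrow> real^'n" where
  "coord_zero i x = (\<chi> j. if j = i then 0 else x$j)"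

text \<open>n-dimensional Lebesgue measure on the hyperplane {zeta_i = 0}: push forward of
  Lebesgue measure restricted to the slab 0 <= x_i <= 1 (thickness one) under the
  projection setting the i-th coordinate to 0 (equal to Lebesgue measure on the
  hyperplane by Fubini).\<close>

definition hyperplane_measure :: "'n::finite \<Rightarrow> (real^'n) measure" where
  "hyperplane_measure i =
     distr (density lborel (indicator {x. 0 \<le> x$i \<and> x$i \<le> 1})) borel (coord_zero i)"

definition sphere_chart :: "'n::finite \<Rightarrow> real^'n \<Rightarrow> real^'n" where
  "sphere_chart i \<zeta> =
     (\<chi> j. if j = i then sqrt (1 - (\<Sum>l\<in>UNIV - {i}. (\<zeta>$l)^2)) else \<zeta>$j)"

definition extension_op ::
  "'n::finite \<Rightarrow> (real^'n) set \<Rightarrow> (real^'n \<Rightarrow> complex) \<Rightarrow> real^'n \<Rightarrow> complex" where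
  "extension_op i U f x =
     set_lebesgue_integral (hyperplane_measure i) U
       (\<lambda>\<xi>. exp (\<i> * complex_of_real (x \<bullet> sphere_chart i \<xi>)) * f \<xi>)"

definition in_L2 :: "'n::finite \<Rightarrow> (real^'n) set \<Rightarrow> (real^'n \<Rightarrow> complex) \<Rightarrow> bool" where
  "in_L2 i U f \<longleftrightarrow>
     set_borel_measurable (hyperplane_measure i) U f \<and>
     set_integrable (hyperplane_measure i) U (\<lambda>\<xi>. (norm (f \<xi>))^2)"

definition L2_norm_on :: "'n::finite \<Rightarrow> (real^'n) set \<Rightarrow> (real^'n \<Rightarrow> complex) \<Rightarrow> real" where
  "L2_norm_on i U f =
     sqrt (set_lebesgue_integral (hyperplane_measure i) U (\<lambda>\<xi>. (norm (f \<xi>))^2))"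

end

theory Submission
  imports Defs
begin


definition qbox :: "'n::finite \<Rightarrow> ('n \<Rightarrow> real) \<Rightarrow> (real^'n) set" where
  "qbox i a = {\<zeta>. \<zeta>$i = 0 \<and> (\<forall>j. j \<noteq> i \<longrightarrow> \<bar>\<zeta>$j\<bar> \<le> a j)}"

lemma coord_zero_meas: "coord_zero (i::'n::finite) \<in> borel_measurable borel"
proof -
  have "continuous_on UNIV (coord_zero i)"
    unfolding coord_zero_def apply (intro continuous_on_vec_lambda)
    subgoal for j by (cases "j = i") (auto intro!: continuous_intros)
    done
  then show ?thesis by (rule borel_measurable_continuous_onI)
qed

lemma qbox_closed: "closed (qbox (i::'n::finite) a)"
proof -
  have "qbox i a = {\<zeta>. \<zeta>$i = 0} \<inter> (\<Inter>j\<in>UNIV-{i}. {\<zeta>. \<bar>\<zeta>$j\<bar> \<le> a j})"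
    unfolding qbox_def by auto
  moreover have "closed {\<zeta>::real^'n. \<zeta>$i = 0}" for i :: 'n by (intro closed_Collect_eq) (auto intro!: continuous_intros)
  moreover have "\<And>j. closed {\<zeta>::real^'n. \<bar>\<zeta>$j\<bar> \<le> a j}" by (intro closed_Collect_le) (auto intro!: continuous_intros)
  ultimately show ?thesis by (simp add: closed_Int closed_INT)
qed

lemma qbox_sets: "qbox (i::'n::finite) a \<in> sets borel"
  using qbox_closed by (rule borel_closed)

lemma emeasure_qbox:
  fixes i :: "'n::finite"
  assumes a: "\<And>j. a j \<ge> 0"
  shows "emeasure (hyperplane_measure i) (qbox i a) = ennreal (\<Prod>j\<in>UNIV-{i}. 2 * a j)"
proof -
  define l :: "real^'n" where "l = (\<chi> j. if j = i then 0 else - a j)"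
  define u :: "real^'n" where "u = (\<chi> j. if j = i then 1 else a j)"
  have eq: "{x::real^'n. 0 \<le> x$i \<and> x$i \<le> 1} \<inter> (coord_zero i -` qbox i a) = cbox l u"
  proof (rule set_eqI)
    fix x :: "real^'n"
    have "x \<in> cbox l u \<longleftrightarrow> (\<forall>j. l$j \<le> x$j \<and> x$j \<le> u$j)" by (rule mem_box_cart)
    also have "\<dots> \<longleftrightarrow> (0 \<le> x$i \<and> x$i \<le> 1) \<and> (\<forall>j. j \<noteq> i \<longrightarrow> \<bar>x$j\<bar> \<le> a j)"
      unfolding l_def u_def apply (auto simp: abs_le_iff)
      subgoal for j by (drule spec[where x=j]) (auto simp: minus_le_iff)
      done
    also have "\<dots> \<longleftrightarrow> x \<in> {x::real^'n. 0 \<le> x$i \<and> x$i \<le> 1} \<inter> (coord_zero i -` qbox i a)"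
      unfolding qbox_def coord_zero_def by auto
    finally show "x \<in> {x::real^'n. 0 \<le> x$i \<and> x$i \<le> 1} \<inter> (coord_zero i -` qbox i a) \<longleftrightarrow> x \<in> cbox l u" by simp
  qed
  have slab: "{x::real^'n. 0 \<le> x$i \<and> x$i \<le> 1} \<in> sets borel"
    by (intro borel_closed closed_Collect_conj closed_Collect_le) (auto intro!: continuous_intros)
  have pre: "coord_zero i -` qbox i a \<in> sets borel"
    using measurable_sets_borel[OF coord_zero_meas qbox_sets, of i i a] by simp
  have "emeasure (hyperplane_measure i) (qbox i a)
      = emeasure (density lborel (indicator {x. 0 \<le> x$i \<and> x$i \<le> 1})) (coord_zero i -` qbox i a)"
    unfolding hyperplane_measure_def
    by (subst emeasure_distr) (auto simp: coord_zero_meas qbox_sets)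
  also have "\<dots> = (\<integral>\<^sup>+ x. indicator ({x::real^'n. 0 \<le> x$i \<and> x$i \<le> 1} \<inter> (coord_zero i -` qbox i a)) x \<partial>lborel)"
    apply (subst emeasure_density)
    subgoal using slab by (simp add: borel_measurable_indicator)
    subgoal using pre by simp
    apply (rule nn_integral_cong)
    apply (simp add: indicator_def)
    done
  also have "\<dots> = emeasure lborel (cbox l u)" unfolding eq by simp
  also have "\<dots> = ennreal (measure lborel (cbox l u))"
    using emeasure_lborel_cbox_finite[of l u] by (intro emeasure_eq_ennreal_measure) simp
  also have "measure lborel (cbox l u) = (\<Prod>j\<in>UNIV. u$j - l$j)"
  proof (rule content_cbox_cart)
    have "l \<in> cbox l u" using a unfolding l_def u_def by (auto simp: mem_box_cart)
    then show "cbox l u \<noteq> {}" by auto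
  qed
  also have "(\<Prod>j\<in>UNIV. u$j - l$j) = (\<Prod>j\<in>UNIV-{i}. 2 * a j)"
  proof -
    have "(\<Prod>j\<in>UNIV. u$j - l$j) = (u$i - l$i) * (\<Prod>j\<in>UNIV-{i}. u$j - l$j)"
      by (simp add: prod.remove)
    also have "\<dots> = (\<Prod>j\<in>UNIV-{i}. 2 * a j)" unfolding l_def u_def
      by (auto intro!: prod.cong)
    finally show ?thesis .
  qed
  finally show ?thesis .
qed

lemma hm_sets[simp]: "sets (hyperplane_measure i) = sets borel"
  and hm_space[simp]: "space (hyperplane_measure i) = UNIV"
  unfolding hyperplane_measure_def by simp_all

lemma measure_qbox:
  fixes i :: "'n::finite"
  assumes a: "\<And>j. a j \<ge> 0"
  shows "measure (hyperplane_measure i) (qbox i a) = (\<Prod>j\<in>UNIV-{i}. 2 * a j)"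
  unfolding measure_def using emeasure_qbox[where a=a and i=i, OF a] a by (simp add: prod_nonneg)

lemma L2_box:
  fixes i :: "'n::finite"
  assumes a: "\<And>j. a j \<ge> 0" and QU: "qbox i a \<subseteq> U"
  shows "in_L2 i U (indicator (qbox i a))"
    and "L2_norm_on i U (indicator (qbox i a)) = sqrt (\<Prod>j\<in>UNIV-{i}. 2 * a j)"
proof -
  have fin: "emeasure (hyperplane_measure i) (qbox i a) < \<infinity>"
    using emeasure_qbox[where a=a and i=i, OF a] by simp
  have eq1: "(\<lambda>x. indicator U x *\<^sub>R (indicator (qbox i a) x :: complex)) = indicator (qbox i a)"
    using QU by (auto simp: indicator_def fun_eq_iff)
  have eq2: "(\<lambda>x. indicator U x *\<^sub>R (norm (indicator (qbox i a) x :: complex))^2) = (indicator (qbox i a) :: _ \<Rightarrow> real)"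
    using QU by (auto simp: indicator_def fun_eq_iff)
  show "in_L2 i U (indicator (qbox i a))"
    unfolding in_L2_def set_borel_measurable_def set_integrable_def eq1 eq2
    using fin qbox_sets[of i a] by (auto simp: integrable_indicator_iff intro!: borel_measurable_indicator)
  show "L2_norm_on i U (indicator (qbox i a)) = sqrt (\<Prod>j\<in>UNIV-{i}. 2 * a j)"
    unfolding L2_norm_on_def set_lebesgue_integral_def eq2
    using measure_qbox[where a=a and i=i, OF a] by simp
qed

lemma psi_bound:
  fixes i :: "'n::finite" and x \<xi> :: "real^'n"
  assumes a: "\<And>j. a j \<ge> 0" and \<xi>Q: "\<xi> \<in> qbox i a"
    and s1: "(\<Sum>l\<in>UNIV-{i}. (a l)^2) \<le> 1"
    and b: "(\<Sum>j\<in>UNIV-{i}. \<bar>x$j\<bar> * a j) + \<bar>x$i\<bar> * (\<Sum>l\<in>UNIV-{i}. (a l)^2) \<le> 1"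
  shows "\<bar>(\<Sum>j\<in>UNIV-{i}. x$j * \<xi>$j) + x$i * (sqrt (1 - (\<Sum>l\<in>UNIV-{i}. (\<xi>$l)^2)) - 1)\<bar> \<le> 1"
proof -
  have \<xi>a: "\<bar>\<xi>$j\<bar> \<le> a j" if "j \<noteq> i" for j using \<xi>Q that unfolding qbox_def by auto
  define s where "s = (\<Sum>l\<in>UNIV-{i}. (\<xi>$l)^2)"
  have s0: "0 \<le> s" unfolding s_def by (intro sum_nonneg) auto
  have sa: "s \<le> (\<Sum>l\<in>UNIV-{i}. (a l)^2)" unfolding s_def
  proof (intro sum_mono)
    fix l assume "l \<in> UNIV - {i}"
    then have "\<bar>\<xi>$l\<bar> \<le> a l" using \<xi>a by auto
    then have "\<bar>\<xi>$l\<bar>^2 \<le> (a l)^2" by (intro power_mono) auto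
    then show "(\<xi>$l)^2 \<le> (a l)^2" by simp
  qed
  have s1': "s \<le> 1" using sa s1 by linarith
  have sq1: "sqrt (1 - s) \<le> 1" using s0 by simp
  have sq2: "1 - s \<le> sqrt (1 - s)"
  proof -
    have "1 - s = sqrt (1 - s) * sqrt (1 - s)" using s1' by simp
    also have "\<dots> \<le> sqrt (1 - s) * 1" using sq1 s1' by (intro mult_left_mono) auto
    finally show ?thesis by simp
  qed
  have t2: "\<bar>x$i * (sqrt (1 - s) - 1)\<bar> \<le> \<bar>x$i\<bar> * (\<Sum>l\<in>UNIV-{i}. (a l)^2)"
  proof -
    have "\<bar>sqrt (1 - s) - 1\<bar> \<le> s" using sq1 sq2 by linarith
    then have "\<bar>sqrt (1 - s) - 1\<bar> \<le> (\<Sum>l\<in>UNIV-{i}. (a l)^2)" using sa by linarith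
    then show ?thesis unfolding abs_mult by (intro mult_left_mono) auto
  qed
  have t1: "\<bar>\<Sum>j\<in>UNIV-{i}. x$j * \<xi>$j\<bar> \<le> (\<Sum>j\<in>UNIV-{i}. \<bar>x$j\<bar> * a j)"
  proof -
    have "\<bar>\<Sum>j\<in>UNIV-{i}. x$j * \<xi>$j\<bar> \<le> (\<Sum>j\<in>UNIV-{i}. \<bar>x$j * \<xi>$j\<bar>)" by (rule sum_abs)
    also have "\<dots> \<le> (\<Sum>j\<in>UNIV-{i}. \<bar>x$j\<bar> * a j)"
      using \<xi>a by (intro sum_mono) (auto simp: abs_mult intro: mult_left_mono)
    finally show ?thesis .
  qed
  show ?thesis using t1 t2 b unfolding s_def by linarith
qed

lemma cos_ge_half: "\<bar>t::real\<bar> \<le> 1 \<Longrightarrow> 1/2 \<le> cos t"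
proof -
  assume t: "\<bar>t\<bar> \<le> 1"
  have "1 \<le> pi / 3" using pi_gt3 by simp
  then have "cos (pi/3) \<le> cos \<bar>t\<bar>" using t by (intro cos_monotone_0_pi_le) auto
  then show ?thesis by (simp add: cos_60)
qed

lemma inner_chart:
  fixes i :: "'n::finite" and x \<xi> :: "real^'n"
  shows "x \<bullet> sphere_chart i \<xi> = x$i + ((\<Sum>j\<in>UNIV-{i}. x$j * \<xi>$j) + x$i * (sqrt (1 - (\<Sum>l\<in>UNIV-{i}. (\<xi>$l)^2)) - 1))"
proof -
  have "x \<bullet> sphere_chart i \<xi> = (\<Sum>j\<in>UNIV. x$j * sphere_chart i \<xi> $ j)"
    unfolding inner_vec_def by simp
  also have "\<dots> = x$i * sphere_chart i \<xi> $ i + (\<Sum>j\<in>UNIV-{i}. x$j * sphere_chart i \<xi> $ j)"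
    by (simp add: sum.remove)
  also have "(\<Sum>j\<in>UNIV-{i}. x$j * sphere_chart i \<xi> $ j) = (\<Sum>j\<in>UNIV-{i}. x$j * \<xi>$j)"
    by (intro sum.cong) (auto simp: sphere_chart_def)
  finally show ?thesis by (simp add: sphere_chart_def algebra_simps)
qed



lemma ext_lower:
  fixes i :: "'n::finite" and x :: "real^'n"
  assumes a: "\<And>j. a j \<ge> 0" and QU: "qbox i a \<subseteq> U"
    and s1: "(\<Sum>l\<in>UNIV-{i}. (a l)^2) \<le> 1"
    and b: "(\<Sum>j\<in>UNIV-{i}. \<bar>x$j\<bar> * a j) + \<bar>x$i\<bar> * (\<Sum>l\<in>UNIV-{i}. (a l)^2) \<le> 1"
  shows "(\<Prod>j\<in>UNIV-{i}. 2 * a j) / 2 \<le> norm (extension_op i U (indicator (qbox i a)) x)"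
proof -
  define M where "M = hyperplane_measure i"
  define Q where "Q = qbox i a"
  define \<psi> where "\<psi> \<xi> = (\<Sum>j\<in>UNIV-{i}. x$j * \<xi>$j) + x$i * (sqrt (1 - (\<Sum>l\<in>UNIV-{i}. (\<xi>$l)^2)) - 1)" for \<xi> :: "real^'n"
  define h where "h \<xi> = indicator Q \<xi> * exp (\<i> * complex_of_real (\<psi> \<xi>))" for \<xi>
  have cont: "continuous_on UNIV (\<lambda>\<xi>. exp (\<i> * complex_of_real (\<psi> \<xi>)))"
    unfolding \<psi>_def by (intro continuous_intros)
  have hmeas: "h \<in> borel_measurable M"
  proof -
    have "h \<in> borel_measurable borel"
      unfolding h_def using cont qbox_sets[of i a] unfolding Q_def
      by (intro borel_measurable_times borel_measurable_indicator borel_measurable_continuous_onI) auto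
    moreover have "borel_measurable M = borel_measurable borel" using measurable_cong_sets[of M borel borel borel] unfolding M_def by simp
    ultimately show ?thesis by metis
  qed
  have indint: "integrable M (indicator Q :: _ \<Rightarrow> real)"
    using emeasure_qbox[where a=a and i=i, OF a] qbox_sets[of i a]
    unfolding M_def Q_def by (simp add: integrable_indicator_iff)
  have hint: "integrable M h"
    by (rule Bochner_Integration.integrable_bound[OF indint hmeas]) (auto simp: h_def indicator_def norm_mult)
  have E_eq: "extension_op i U (indicator Q) x = exp (\<i> * complex_of_real (x$i)) * integral\<^sup>L M h"
  proof -
    have "extension_op i U (indicator Q) x = integral\<^sup>L M (\<lambda>\<xi>. exp (\<i> * complex_of_real (x$i)) * h \<xi>)"
      unfolding extension_op_def set_lebesgue_integral_def M_def
    proof (intro Bochner_Integration.integral_cong refl)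
      fix \<xi> :: "real^'n"
      show "indicator U \<xi> *\<^sub>R (exp (\<i> * complex_of_real (x \<bullet> sphere_chart i \<xi>)) * indicator Q \<xi>)
          = exp (\<i> * complex_of_real (x$i)) * h \<xi>"
      proof -
        have ph: "x \<bullet> sphere_chart i \<xi> = x$i + \<psi> \<xi>" unfolding \<psi>_def by (rule inner_chart)
        have ex: "exp (\<i> * complex_of_real (x \<bullet> sphere_chart i \<xi>)) = exp (\<i> * complex_of_real (x$i)) * exp (\<i> * complex_of_real (\<psi> \<xi>))"
          unfolding ph by (simp add: distrib_left exp_add)
        show ?thesis using QU unfolding h_def Q_def ex by (auto simp: indicator_def)
      qed
    qed
    then show ?thesis by simp
  qed
  have "norm (extension_op i U (indicator Q) x) = norm (integral\<^sup>L M h)"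
    unfolding E_eq norm_mult by simp
  also have "\<dots> \<ge> Re (integral\<^sup>L M h)" by (rule complex_Re_le_cmod)
  finally have n1: "Re (integral\<^sup>L M h) \<le> norm (extension_op i U (indicator Q) x)" .
  have "Re (integral\<^sup>L M h) = integral\<^sup>L M (\<lambda>\<xi>. Re (h \<xi>))"
    using hint by simp
  also have "\<dots> \<ge> integral\<^sup>L M (\<lambda>\<xi>. indicator Q \<xi> / 2)"
  proof (rule integral_mono)
    show "integrable M (\<lambda>\<xi>. indicator Q \<xi> / 2 :: real)" using indint by simp
    show "integrable M (\<lambda>\<xi>. Re (h \<xi>))" using hint by simp
    fix \<xi> :: "real^'n"
    show "indicator Q \<xi> / 2 \<le> Re (h \<xi>)"
    proof (cases "\<xi> \<in> Q")
      case True
      have "\<bar>\<psi> \<xi>\<bar> \<le> 1" unfolding \<psi>_def using psi_bound[where a=a, OF a _ s1 b] True Q_def by blast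
      then have "1/2 \<le> cos (\<psi> \<xi>)" by (rule cos_ge_half)
      then show ?thesis using True by (simp add: h_def Re_exp)
    next
      case False
      then show ?thesis by (simp add: h_def)
    qed
  qed
  also have "integral\<^sup>L M (\<lambda>\<xi>. indicator Q \<xi> / 2) = (\<Prod>j\<in>UNIV-{i}. 2 * a j) / 2"
    using measure_qbox[where a=a and i=i, OF a] unfolding M_def Q_def by simp
  finally show ?thesis using n1 unfolding Q_def by linarith
qed



lemma powr_choose:
  fixes e t :: real assumes "e > 0" "t > 0" "\<delta>0 > 0"
  shows "\<exists>\<delta>. 0 < \<delta> \<and> \<delta> < \<delta>0 \<and> \<delta> powr e \<le> t"
proof -
  define \<delta> where "\<delta> = min (\<delta>0/2) (t powr (1/e))"
  have d0: "0 < \<delta>" using assms unfolding \<delta>_def by simp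
  have "\<delta> powr e \<le> (t powr (1/e)) powr e"
    using assms d0 unfolding \<delta>_def by (intro powr_mono2) auto
  also have "\<dots> = t" using assms by (simp add: powr_powr)
  finally have "\<delta> powr e \<le> t" .
  moreover have "\<delta> < \<delta>0" unfolding \<delta>_def using assms by simp
  ultimately show ?thesis using d0 by blast
qed

lemma final_alg:
  fixes N k :: nat and p C c \<delta>0 :: real
  assumes N2: "N \<ge> 2" and k1: "1 \<le> k" and p0: "0 < p"
    and plt: "p < 2 * (real N + real k) / (real k * (real N + real k - 2))"
    and C0: "C \<ge> 0" and c0: "c > 0" and d0: "\<delta>0 > 0"
    and H: "\<And>\<delta>. 0 < \<delta> \<Longrightarrow> \<delta> < \<delta>0 \<Longrightarrow>
       ((2^(N-1) * \<delta>^(N+k-2) / 2)^k) powr p * ((2*c)^N / \<delta>^(N+k))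
         \<le> (C * sqrt (2^(N-1) * \<delta>^(N+k-2))^k) powr p"
  shows False
proof -
  define L where "L = real N + real k - 2"
  have L1: "L \<ge> 1" using N2 k1 unfolding L_def by simp
  have LN: "real (N+k-2) = L" using N2 unfolding L_def by simp
  define e where "e = real N + real k - L * real k * p / 2"
  have kL: "real k * L > 0" using k1 L1 by simp
  have "p * (real k * L) < 2 * (real N + real k)"
    using plt kL unfolding L_def by (simp add: pos_less_divide_eq)
  then have e0: "e > 0" unfolding e_def by (simp add: algebra_simps)
  define \<alpha> :: real where "\<alpha> = (2^(N-1) / 2) powr (real k * p)"
  define \<beta> :: real where "\<beta> = C powr p * (2^(N-1)) powr (real k * p / 2)"
  define \<gamma> :: real where "\<gamma> = (2*c)^N"
  have \<alpha>0: "\<alpha> > 0" unfolding \<alpha>_def by simp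
  have \<gamma>0: "\<gamma> > 0" unfolding \<gamma>_def using c0 by simp
  have key: "\<alpha> * \<gamma> \<le> \<beta> * \<delta> powr e" if d: "0 < \<delta>" "\<delta> < \<delta>0" for \<delta>
  proof -
    have A: "((2^(N-1) * \<delta>^(N+k-2) / 2)^k) powr p = \<alpha> * \<delta> powr (L * real k * p)"
    proof -
      have "((2^(N-1) * \<delta>^(N+k-2) / 2)^k) powr p = ((2^(N-1) / 2) * \<delta> powr L) powr (real k * p)"
        using d by (simp add: powr_realpow[symmetric] powr_powr LN mult.commute)
      also have "\<dots> = (2^(N-1) / 2) powr (real k * p) * (\<delta> powr L) powr (real k * p)"
        using d by (intro powr_mult; simp)
      also have "\<dots> = \<alpha> * \<delta> powr (L * real k * p)"
        unfolding \<alpha>_def using d by (simp add: powr_powr mult.assoc)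
      finally show ?thesis .
    qed
    have B: "(C * sqrt (2^(N-1) * \<delta>^(N+k-2))^k) powr p = \<beta> * \<delta> powr (L * real k * p / 2)"
    proof -
      have s: "sqrt (2^(N-1) * \<delta>^(N+k-2)) = (2^(N-1)) powr (1/2) * \<delta> powr (L/2)"
        using d by (simp add: sqrt_def[symmetric] powr_half_sqrt[symmetric] real_sqrt_mult
              powr_realpow[symmetric] powr_powr LN)
      have "(C * sqrt (2^(N-1) * \<delta>^(N+k-2))^k) powr p
          = C powr p * ((2^(N-1)) powr (1/2) * \<delta> powr (L/2)) powr (real k * p)"
        unfolding s using C0 d by (simp add: powr_mult powr_realpow[symmetric] powr_powr mult.assoc)
      also have "\<dots> = \<beta> * \<delta> powr (L * real k * p / 2)"
        unfolding \<beta>_def using d by (simp add: powr_mult powr_powr mult.assoc)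
      finally show ?thesis .
    qed
    have D: "(2*c)^N / \<delta>^(N+k) = \<gamma> * \<delta> powr (- (real N + real k))"
      unfolding \<gamma>_def powr_minus using d by (simp add: powr_realpow[symmetric] divide_inverse)
    have "\<alpha> * \<delta> powr (L * real k * p) * (\<gamma> * \<delta> powr (- (real N + real k))) \<le> \<beta> * \<delta> powr (L * real k * p / 2)"
      using H[OF d] unfolding A B D .
    then have "(\<alpha> * \<gamma>) * \<delta> powr (L * real k * p - (real N + real k)) \<le> (\<beta> * \<delta> powr e) * \<delta> powr (L * real k * p - (real N + real k))"
      using d unfolding e_def by (simp add: powr_add[symmetric] algebra_simps)
    then show ?thesis using d by (simp add: mult_le_cancel_right)
  qed
  define t where "t = \<alpha> * \<gamma> / (\<beta> + 1)"
  have \<beta>0: "\<beta> \<ge> 0" unfolding \<beta>_def by simp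
  have t0: "t > 0" unfolding t_def using \<alpha>0 \<gamma>0 \<beta>0 by simp
  obtain \<delta> where d: "0 < \<delta>" "\<delta> < \<delta>0" "\<delta> powr e \<le> t" using powr_choose[OF e0 t0 d0] by blast
  have "\<alpha> * \<gamma> \<le> \<beta> * \<delta> powr e" using key[OF d(1,2)] .
  also have "\<dots> \<le> \<beta> * t" using d(3) \<beta>0 by (intro mult_left_mono) auto
  also have "\<dots> < \<alpha> * \<gamma>" unfolding t_def using \<alpha>0 \<gamma>0 \<beta>0
    by (simp add: field_simps)
  finally show False by simp
qed



theorem mainTheorem9:
  fixes K :: "'n::finite set"
    and U :: "'n \<Rightarrow> (real^'n) set"
    and p :: real
  assumes n_ge: "CARD('n) \<ge> 2"
    and K_ne: "K \<noteq> {}"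
    and p_pos: "0 < p"
    and p_lt: "p < 2 * (real CARD('n) + real (card K)) /
                   (real (card K) * (real CARD('n) + real (card K) - 2))"
    and U_open: "\<forall>i\<in>K. openin (top_of_set (hyperplane i)) (U i)"
    and U_zero: "\<forall>i\<in>K. 0 \<in> U i"
    and U_small: "\<forall>i\<in>K. U i \<subseteq> ball 0 1"
  shows "\<not> (\<exists>C\<ge>0. \<forall>f :: 'n \<Rightarrow> real^'n \<Rightarrow> complex.
            (\<forall>i\<in>K. in_L2 i (U i) (f i)) \<longrightarrow>
            (\<integral>\<^sup>+ x. ennreal (norm (\<Prod>i\<in>K. extension_op i (U i) (f i) x) powr p) \<partial>lborel)
              \<le> ennreal ((C * (\<Prod>i\<in>K. L2_norm_on i (U i) (f i))) powr p))"
proof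
  assume "\<exists>C\<ge>0. \<forall>f :: 'n \<Rightarrow> real^'n \<Rightarrow> complex.
            (\<forall>i\<in>K. in_L2 i (U i) (f i)) \<longrightarrow>
            (\<integral>\<^sup>+ x. ennreal (norm (\<Prod>i\<in>K. extension_op i (U i) (f i) x) powr p) \<partial>lborel)
              \<le> ennreal ((C * (\<Prod>i\<in>K. L2_norm_on i (U i) (f i))) powr p)"
  then obtain C where C0: "C \<ge> 0" and HC: "\<And>f :: 'n \<Rightarrow> real^'n \<Rightarrow> complex.
            (\<forall>i\<in>K. in_L2 i (U i) (f i)) \<Longrightarrow>
            (\<integral>\<^sup>+ x. ennreal (norm (\<Prod>i\<in>K. extension_op i (U i) (f i) x) powr p) \<partial>lborel)
              \<le> ennreal ((C * (\<Prod>i\<in>K. L2_norm_on i (U i) (f i))) powr p)" by blast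
  define N where "N = CARD('n)"
  define k where "k = card K"
  have N2: "N \<ge> 2" using n_ge unfolding N_def .
  have k1: "1 \<le> k" using K_ne unfolding k_def by (simp add: Suc_le_eq card_gt_0_iff)
  have kN: "k \<le> N" unfolding k_def N_def by (rule card_mono) auto
  have plt: "p < 2 * (real N + real k) / (real k * (real N + real k - 2))"
    using p_lt unfolding N_def k_def .
  have "\<forall>i\<in>K. \<exists>e>0. ball 0 e \<inter> hyperplane i \<subseteq> U i"
    using U_open U_zero by (auto simp: openin_contains_ball)
  then obtain e where e: "\<And>i. i \<in> K \<Longrightarrow> e i > 0 \<and> ball 0 (e i) \<inter> hyperplane i \<subseteq> U i"
    by metis
  define r where "r = Min (insert 1 (e ` K))"
  have r0: "r > 0" unfolding r_def using e by (subst Min_gr_iff) auto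
  have r1: "r \<le> 1" unfolding r_def by (intro Min_le) auto
  have re: "r \<le> e i" if "i \<in> K" for i unfolding r_def using that by (intro Min_le) auto
  define c :: real where "c = 1 / (2 * real N)"
  have c0: "c > 0" using N2 unfolding c_def by simp
  define \<delta>0 :: real where "\<delta>0 = r / (2 * real N)"
  have d00: "\<delta>0 > 0" using N2 r0 unfolding \<delta>0_def by simp
  show False
  proof (rule final_alg[OF N2 k1 p_pos plt C0 c0 d00])
    fix \<delta> :: real assume d: "0 < \<delta>" "\<delta> < \<delta>0"
    show "((2^(N-1) * \<delta>^(N+k-2) / 2)^k) powr p * ((2*c)^N / \<delta>^(N+k))
         \<le> (C * sqrt (2^(N-1) * \<delta>^(N+k-2))^k) powr p"
    proof -
      have dN: "\<delta> * (real N * 2) < r" using d N2 unfolding \<delta>0_def by (simp add: field_simps)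
      have "\<delta> * 4 \<le> \<delta> * (real N * 2)" using d N2 by (intro mult_left_mono) auto
      then have d1: "\<delta> < 1/4" using dN r1 by linarith
      define a where "a j = (if j \<in> K then \<delta>^2 else \<delta>)" for j
      have a0: "a j > 0" for j unfolding a_def using d by auto
      have ad: "a j \<le> \<delta>" for j unfolding a_def using d d1 by (auto simp: power2_eq_square)
      have a2: "(a j)^2 \<le> \<delta>^2" for j using ad a0 by (intro power_mono) (auto simp: less_imp_le)
      have prodA: "(\<Prod>j\<in>UNIV. a j) = \<delta>^(N+k)"
      proof -
        have "(\<Prod>j\<in>UNIV. a j) = (\<Prod>j\<in>UNIV \<inter> {j. j \<in> K}. \<delta>^2) * (\<Prod>j\<in>UNIV \<inter> - {j. j \<in> K}. \<delta>)"
          unfolding a_def by (rule prod.If_cases) simp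
        also have "\<dots> = (\<delta>^2)^k * \<delta>^(N-k)"
        proof -
          have "UNIV \<inter> - {j. j \<in> K} = UNIV - K" by auto
          moreover have "card (UNIV - K) = N - k" unfolding N_def k_def by (rule card_Diff_subset) auto
          moreover have "UNIV \<inter> {j. j \<in> K} = K" by auto
          ultimately show ?thesis by (simp add: k_def)
        qed
        also have "\<dots> = \<delta>^(N+k)" using kN by (simp add: power_mult[symmetric] power_add[symmetric] add.commute)
        finally show ?thesis .
      qed
      define m where "m = 2^(N-1) * \<delta>^(N+k-2)"
      have m0: "m > 0" unfolding m_def using d by simp
      have mi: "(\<Prod>j\<in>UNIV-{i}. 2 * a j) = m" if i: "i \<in> K" for i
      proof -
        have "(2 * a i) * (\<Prod>j\<in>UNIV-{i}. 2 * a j) = (\<Prod>j\<in>UNIV. 2 * a j)"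
          by (simp add: prod.remove)
        also have "\<dots> = 2^N * \<delta>^(N+k)" by (simp add: prod.distrib prodA N_def)
        also have "\<dots> = (2 * a i) * m"
        proof -
          have "2^N = (2::real) * 2^(N-1)" using N2 by (simp add: power_eq_if)
          moreover have "\<delta>^(N+k) = \<delta>^2 * \<delta>^(N+k-2)"
          proof -
            have "N + k = 2 + (N+k-2)" using N2 by simp
            then show ?thesis by (metis power_add)
          qed
          ultimately show ?thesis unfolding m_def a_def using i by simp
        qed
        finally show ?thesis using a0[of i] by simp
      qed
      have sumA: "(\<Sum>l\<in>UNIV-{i}. (a l)^2) \<le> real N * \<delta>^2" for i
      proof -
        have "(\<Sum>l\<in>UNIV-{i}. (a l)^2) \<le> (\<Sum>l\<in>UNIV-{i}. \<delta>^2)" by (intro sum_mono a2)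
        also have "\<dots> = real (card (UNIV - {i})) * \<delta>^2" by simp
        also have "\<dots> \<le> real N * \<delta>^2" unfolding N_def by (intro mult_right_mono) (auto intro: card_mono)
        finally show ?thesis .
      qed
      have Nd: "real N * \<delta> < r / 2" using d N2 unfolding \<delta>0_def by (simp add: field_simps)
      have s1: "(\<Sum>l\<in>UNIV-{i}. (a l)^2) \<le> 1" for i
      proof -
        have "real N * \<delta>^2 \<le> real N * \<delta>" using d d1 by (intro mult_left_mono) (auto simp: power2_eq_square)
        then show ?thesis using sumA[of i] Nd r1 by linarith
      qed
      have QU: "qbox i a \<subseteq> U i" if i: "i \<in> K" for i
      proof
        fix \<zeta> assume z: "\<zeta> \<in> qbox i a"
        have "norm \<zeta> \<le> (\<Sum>j\<in>UNIV. \<bar>\<zeta>$j\<bar>)" by (rule norm_le_l1_cart)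
        also have "\<dots> \<le> (\<Sum>j\<in>(UNIV::'n set). \<delta>)"
        proof (rule sum_mono)
          fix j assume "j \<in> (UNIV :: 'n set)" show "\<bar>\<zeta>$j\<bar> \<le> \<delta>" using z ad[of j] d unfolding qbox_def by (cases "j = i") auto
        qed
        also have "\<dots> = real N * \<delta>" unfolding N_def by simp
        finally have "norm \<zeta> < e i" using Nd re[OF i] r0 by linarith
        moreover have "\<zeta> \<in> hyperplane i" using z unfolding qbox_def hyperplane_def by simp
        ultimately show "\<zeta> \<in> U i" using e[OF i] by auto
      qed
      define f :: "'n \<Rightarrow> real^'n \<Rightarrow> complex" where "f i = indicator (qbox i a)" for i
      have inL2: "\<forall>i\<in>K. in_L2 i (U i) (f i)"
        unfolding f_def using L2_box(1)[where a=a, OF _ QU] a0 by (simp add: less_imp_le)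
      have L2v: "(\<Prod>i\<in>K. L2_norm_on i (U i) (f i)) = sqrt m ^ k"
      proof -
        have "(\<Prod>i\<in>K. L2_norm_on i (U i) (f i)) = (\<Prod>i\<in>K. sqrt m)"
          unfolding f_def using L2_box(2)[where a=a, OF _ QU] a0 mi by (intro prod.cong) (auto simp: less_imp_le)
        then show ?thesis by (simp add: k_def)
      qed
      define w :: "real^'n" where "w = (\<chi> j. c / a j)"
      define X where "X = cbox (-w) w"
      have xX: "x \<in> X \<longleftrightarrow> (\<forall>j. \<bar>x$j\<bar> \<le> c / a j)" for x
        unfolding X_def w_def mem_box_cart
        apply (auto simp: abs_le_iff)
        subgoal for j by (drule spec[where x=j]) linarith
        subgoal for j by (drule spec[where x=j]) linarith
        done
      have Xmeas: "emeasure lborel X = ennreal ((2*c)^N / \<delta>^(N+k))"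
      proof -
        have "emeasure lborel X = ennreal (measure lborel X)"
          unfolding X_def using emeasure_lborel_cbox_finite[of "-w" w]
          by (intro emeasure_eq_ennreal_measure) simp
        also have "measure lborel X = (\<Prod>j\<in>UNIV. w$j - (-w)$j)"
          unfolding X_def
        proof (rule content_cbox_cart)
          have "0 \<in> X" unfolding xX using c0 a0 by (simp add: less_imp_le)
          then show "cbox (-w) w \<noteq> {}" unfolding X_def by auto
        qed
        also have "\<dots> = (\<Prod>j\<in>UNIV. (2*c) / a j)" unfolding w_def by (intro prod.cong) auto
        also have "\<dots> = (\<Prod>j\<in>(UNIV::'n set). 2*c) / (\<Prod>j\<in>UNIV. a j)" by (rule prod_dividef)
        also have "\<dots> = (2*c)^N / \<delta>^(N+k)" unfolding prodA by (simp add: N_def)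
        finally show ?thesis .
      qed
      have lowE: "m / 2 \<le> norm (extension_op i (U i) (f i) x)" if i: "i \<in> K" and x: "x \<in> X" for i x
      proof -
        have xj: "\<bar>x$j\<bar> * a j \<le> c" for j
        proof -
          have "\<bar>x$j\<bar> \<le> c / a j" using x unfolding xX by blast
          then show ?thesis using a0[of j] by (simp add: pos_le_divide_eq)
        qed
        have t1: "(\<Sum>j\<in>UNIV-{i}. \<bar>x$j\<bar> * a j) \<le> 1/2"
        proof -
          have "(\<Sum>j\<in>UNIV-{i}. \<bar>x$j\<bar> * a j) \<le> (\<Sum>j\<in>UNIV-{i}. c)" by (intro sum_mono xj)
          also have "\<dots> = real (card (UNIV - {i})) * c" by simp
          also have "\<dots> \<le> real N * c" unfolding N_def using c0 by (intro mult_right_mono) (auto intro: card_mono)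
          also have "\<dots> = 1/2" unfolding c_def using N2 by simp
          finally show ?thesis .
        qed
        have t2: "\<bar>x$i\<bar> * (\<Sum>l\<in>UNIV-{i}. (a l)^2) \<le> 1/2"
        proof -
          have xi: "\<bar>x$i\<bar> \<le> c / \<delta>^2" using x i unfolding xX a_def by (metis (full_types))
          have "\<bar>x$i\<bar> * (\<Sum>l\<in>UNIV-{i}. (a l)^2) \<le> (c / \<delta>^2) * (real N * \<delta>^2)"
            using xi sumA[of i] c0 d by (intro mult_mono) (auto intro: sum_nonneg)
          also have "\<dots> = 1/2" unfolding c_def using N2 d by simp
          finally show ?thesis .
        qed
        have "(\<Prod>j\<in>UNIV-{i}. 2 * a j) / 2 \<le> norm (extension_op i (U i) (indicator (qbox i a)) x)"
          using t1 t2 by (intro ext_lower[where a=a, OF _ QU[OF i] s1]) (auto simp: less_imp_le a0)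
        then show ?thesis unfolding f_def mi[OF i] .
      qed
      define V where "V = ((m/2)^k) powr p"
      have "(\<integral>\<^sup>+ x. ennreal V * indicator X x \<partial>lborel)
           \<le> (\<integral>\<^sup>+ x. ennreal (norm (\<Prod>i\<in>K. extension_op i (U i) (f i) x) powr p) \<partial>lborel)"
      proof (rule nn_integral_mono)
        fix x :: "real^'n"
        show "ennreal V * indicator X x \<le> ennreal (norm (\<Prod>i\<in>K. extension_op i (U i) (f i) x) powr p)"
        proof (cases "x \<in> X")
          case True
          have "(m/2)^k = (\<Prod>i\<in>K. m/2)" by (simp add: k_def)
          also have "\<dots> \<le> (\<Prod>i\<in>K. norm (extension_op i (U i) (f i) x))"
            using lowE True m0 by (intro prod_mono) auto
          also have "\<dots> = norm (\<Prod>i\<in>K. extension_op i (U i) (f i) x)" by (rule prod_norm)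
          finally have "V \<le> norm (\<Prod>i\<in>K. extension_op i (U i) (f i) x) powr p"
            unfolding V_def using m0 p_pos by (intro powr_mono2) auto
          then show ?thesis using True by simp
        qed simp
      qed
      also have "\<dots> \<le> ennreal ((C * sqrt m ^ k) powr p)"
        using HC[OF inL2] unfolding L2v .
      finally have "ennreal V * emeasure lborel X \<le> ennreal ((C * sqrt m ^ k) powr p)"
        unfolding X_def by (simp add: nn_integral_cmult_indicator)
      then have H1: "ennreal V * ennreal ((2*c)^N / \<delta>^(N+k)) \<le> ennreal ((C * sqrt m ^ k) powr p)"
        unfolding Xmeas .
      have V0: "V \<ge> 0" unfolding V_def by simp
      have W0: "(2*c)^N / \<delta>^(N+k) \<ge> 0" using c0 d by simp
      have "ennreal (V * ((2*c)^N / \<delta>^(N+k))) \<le> ennreal ((C * sqrt m ^ k) powr p)"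
        using H1 by (subst ennreal_mult[OF V0 W0])
      then have "V * ((2*c)^N / \<delta>^(N+k)) \<le> (C * sqrt m ^ k) powr p"
        by (subst (asm) ennreal_le_iff) simp_all
      then show ?thesis unfolding V_def m_def .
    qed
  qed
qed


end
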